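(* The rank-$t$ binary tensor factorization problem on an $n_1\times n_2\times\cdots\times n_s$ tensor $A=(a_{k_1,\dots,k_s})$ can be formulated as the following instance of Problem E on an $st$-partite hypergraph: $$\max_{x^{i,j}}\ \sum_{k_1\in[n_1]}\cdots\sum_{k_s\in[n_s]}\Big[(2a_{k_1,\dots,k_s}-1)\sum_{i\in[t]}\prod_{j\in[s]}x^{i,j}_{k_j}-2\sum_{i,i'\in[t],\,i<i'}\prod_{j\in[s]}x^{i,j}_{k_j}x^{i',j}_{k_j}\Big]$$ subject to $x^{i,j}\in\{0,1\}^{n_j}$ for all $i\in[t]$, $j\in[s]$, where the tensor $B$ corresponds to $B=\sum_{i\in[t]}x^{i,1}\otimes\cdots\otimes x^{i,s}$.
   Context: Rank-$t$ binary tensor factorization problem: given a rational $n_1\times\cdots\times n_s$ tensor $A$ and integer $t$, find an $n_1\times\cdots\times n_s$ tensor $B$ of binary rank $t$ (minimum $r$ with $B=\sum_{i\in[r]}c^{i,1}\otimes\cdots\otimes c^{i,s}$, $c^{i,j}\in\{0,1\}^{n_j}$) minimizing $\sum_{k_1,\dots,k_s}(a_{k_1,\dots,k_s}-b_{k_1,\dots,k_s})^2$. Problem E: maximize a polynomial $\sum_{k\in V}c_kx_k+\sum_{e\in E}c_e\prod_{k\in e}x_k$ over binary $x\in\{0,1\}^V$, given via a hypergraph $H=(V,E)$ with edges of cardinality at least two and rational coefficients. A hypergraph is $p$-partite if its node set can be partitioned into $p$ sets (sides) such that every edge contains at most one node from each side; here the sides correspond to the variable vectors $x^{i,j}$. 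*)

theory Defs
  imports Complex_Main "HOL-Library.FuncSet"
begin

(* An s-way tensor of size n_1 x ... x n_s (0-indexed: modes j < s, sizes n j)
   is a function on index tuples k, with k j < n j for j < s. *)
definition tensor_index :: "nat \<Rightarrow> (nat \<Rightarrow> nat) \<Rightarrow> (nat \<Rightarrow> nat) set" where
  "tensor_index s n = PiE {..<s} (\<lambda>j. {..<n j})"

definition sq_err :: "nat \<Rightarrow> (nat \<Rightarrow> nat) \<Rightarrow> ((nat \<Rightarrow> nat) \<Rightarrow> rat) \<Rightarrow> ((nat \<Rightarrow> nat) \<Rightarrow> rat) \<Rightarrow> rat" where
  "sq_err s n A B = (\<Sum>k\<in>tensor_index s n. (A k - B k)^2)"

(* c i j is the binary vector c^{i,j} in {0,1}^{n_j} (for i < r, j < s) *)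
definition binary_vecs :: "nat \<Rightarrow> nat \<Rightarrow> (nat \<Rightarrow> nat) \<Rightarrow> (nat \<Rightarrow> nat \<Rightarrow> nat \<Rightarrow> rat) \<Rightarrow> bool" where
  "binary_vecs r s n c \<longleftrightarrow> (\<forall>i<r. \<forall>j<s. \<forall>k<n j. c i j k \<in> {0, 1})"

definition tensor_of :: "nat \<Rightarrow> nat \<Rightarrow> (nat \<Rightarrow> nat \<Rightarrow> nat \<Rightarrow> rat) \<Rightarrow> (nat \<Rightarrow> nat) \<Rightarrow> rat" where
  "tensor_of r s c = (\<lambda>k. \<Sum>i<r. \<Prod>j<s. c i j (k j))"

definition has_binary_decomp :: "nat \<Rightarrow> nat \<Rightarrow> (nat \<Rightarrow> nat) \<Rightarrow> ((nat \<Rightarrow> nat) \<Rightarrow> rat) \<Rightarrow> bool" where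
  "has_binary_decomp r s n B \<longleftrightarrow>
     (\<exists>c. binary_vecs r s n c \<and> (\<forall>k\<in>tensor_index s n. B k = tensor_of r s c k))"

definition binary_rank :: "nat \<Rightarrow> (nat \<Rightarrow> nat) \<Rightarrow> ((nat \<Rightarrow> nat) \<Rightarrow> rat) \<Rightarrow> nat" where
  "binary_rank s n B = (LEAST r. has_binary_decomp r s n B)"

definition btf_feasible :: "nat \<Rightarrow> nat \<Rightarrow> (nat \<Rightarrow> nat) \<Rightarrow> ((nat \<Rightarrow> nat) \<Rightarrow> rat) \<Rightarrow> bool" where
  "btf_feasible t s n B \<longleftrightarrow> (\<exists>r. has_binary_decomp r s n B) \<and> binary_rank s n B \<le> t"

definition btf_optimal :: "nat \<Rightarrow> nat \<Rightarrow> (nat \<Rightarrow> nat) \<Rightarrow> ((nat \<Rightarrow> nat) \<Rightarrow> rat) \<Rightarrow> ((nat \<Rightarrow> nat) \<Rightarrow> rat) \<Rightarrow> bool" where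
  "btf_optimal t s n A B \<longleftrightarrow> btf_feasible t s n B \<and>
     (\<forall>B'. btf_feasible t s n B' \<longrightarrow> sq_err s n A B \<le> sq_err s n A B')"

definition btf_obj :: "nat \<Rightarrow> nat \<Rightarrow> (nat \<Rightarrow> nat) \<Rightarrow> ((nat \<Rightarrow> nat) \<Rightarrow> rat) \<Rightarrow> (nat \<Rightarrow> nat \<Rightarrow> nat \<Rightarrow> rat) \<Rightarrow> rat" where
  "btf_obj t s n A x = (\<Sum>k\<in>tensor_index s n.
      (2 * A k - 1) * (\<Sum>i<t. \<Prod>j<s. x i j (k j))
      - 2 * (\<Sum>i<t. \<Sum>i'\<in>{i<..<t}. \<Prod>j<s. x i j (k j) * x i' j (k j)))"

definition hypergraph :: "'v set \<Rightarrow> 'v set set \<Rightarrow> bool" where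
  "hypergraph V E \<longleftrightarrow> finite V \<and> finite E \<and> (\<forall>e\<in>E. e \<subseteq> V \<and> card e \<ge> 2)"

definition probE_obj :: "'v set \<Rightarrow> 'v set set \<Rightarrow> ('v \<Rightarrow> rat) \<Rightarrow> ('v set \<Rightarrow> rat) \<Rightarrow> ('v \<Rightarrow> rat) \<Rightarrow> rat" where
  "probE_obj V E cV cE x = (\<Sum>v\<in>V. cV v * x v) + (\<Sum>e\<in>E. cE e * (\<Prod>v\<in>e. x v))"

definition p_partite :: "nat \<Rightarrow> 'v set \<Rightarrow> 'v set set \<Rightarrow> bool" where
  "p_partite p V E \<longleftrightarrow> (\<exists>side :: 'v \<Rightarrow> nat. side ` V \<subseteq> {..<p} \<and> (\<forall>e\<in>E. inj_on side e))"

(* node set: variables x^{i,j}_k, i < t, j < s, k < n_j *)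
definition btf_nodes :: "nat \<Rightarrow> nat \<Rightarrow> (nat \<Rightarrow> nat) \<Rightarrow> (nat \<times> nat \<times> nat) set" where
  "btf_nodes t s n = {(i, j, k). i < t \<and> j < s \<and> k < n j}"

end

theory Submission
  imports Defs
begin


lemma sq_sum:
  fixes p :: "nat \<Rightarrow> rat"
  shows "(\<Sum>i<t. p i)^2 = (\<Sum>i<t. p i^2) + 2*(\<Sum>i<t. \<Sum>i'\<in>{i<..<t}. p i * p i')"
proof (induction t)
  case 0 then show ?case by simp
next
  case (Suc t)
  have e: "(\<Sum>i<Suc t. \<Sum>i'\<in>{i<..<Suc t}. p i * p i') = (\<Sum>i<t. \<Sum>i'\<in>{i<..<t}. p i * p i') + (\<Sum>i<t. p i) * p t"
  proof -
    have "(\<Sum>i<Suc t. \<Sum>i'\<in>{i<..<Suc t}. p i * p i') = (\<Sum>i<t. \<Sum>i'\<in>{i<..<Suc t}. p i * p i')"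
    proof -
      have "{t<..<Suc t} = {}" by auto
      then show ?thesis by simp
    qed
    also have "\<dots> = (\<Sum>i<t. (\<Sum>i'\<in>{i<..<t}. p i * p i') + p i * p t)"
    proof (rule sum.cong)
      fix i assume "i \<in> {..<t}"
      then have "{i<..<Suc t} = insert t {i<..<t}" by auto
      then show "(\<Sum>i'\<in>{i<..<Suc t}. p i * p i') = (\<Sum>i'\<in>{i<..<t}. p i * p i') + p i * p t" by simp
    qed simp
    finally show ?thesis by (simp add: sum.distrib sum_distrib_right)
  qed
  show ?case unfolding e using Suc by (simp add: power2_eq_square algebra_simps)
qed

lemma tensor_of_pad:
  assumes "s \<ge> 1" "r \<le> t"
  shows "tensor_of t s (\<lambda>i j k. if i < r then c i j k else 0) k = tensor_of r s c k"
proof -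
  have "tensor_of t s (\<lambda>i j k. if i < r then c i j k else 0) k = (\<Sum>i<t. if i < r then (\<Prod>j<s. c i j (k j)) else 0)"
    unfolding tensor_of_def
  proof (rule sum.cong)
    fix i assume "i \<in> {..<t}"
    show "(\<Prod>j<s. (if i < r then c i j (k j) else 0)) = (if i < r then \<Prod>j<s. c i j (k j) else 0)"
      using assms(1) by (auto intro!: prod_zero)
  qed simp
  also have "\<dots> = (\<Sum>i\<in>{i\<in>{..<t}. i < r}. \<Prod>j<s. c i j (k j))"
    by (rule sum.inter_filter[symmetric]) simp
  also have "{i\<in>{..<t}. i < r} = {..<r}" using assms(2) by auto
  finally show ?thesis by (simp add: tensor_of_def)
qed

lemma part1:
  assumes "s \<ge> 1"
  shows "btf_feasible t s n B \<longleftrightarrow>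
        (\<exists>x. binary_vecs t s n x \<and> (\<forall>k\<in>tensor_index s n. B k = tensor_of t s x k))"
proof
  assume "btf_feasible t s n B"
  then obtain r where r: "has_binary_decomp r s n B" and le: "binary_rank s n B \<le> t"
    unfolding btf_feasible_def by blast
  define r0 where "r0 = binary_rank s n B"
  have "has_binary_decomp r0 s n B" unfolding r0_def binary_rank_def using r by (rule LeastI)
  then obtain c where c: "binary_vecs r0 s n c" "\<forall>k\<in>tensor_index s n. B k = tensor_of r0 s c k"
    unfolding has_binary_decomp_def by blast
  have r0t: "r0 \<le> t" using le r0_def by simp
  show "\<exists>x. binary_vecs t s n x \<and> (\<forall>k\<in>tensor_index s n. B k = tensor_of t s x k)"
    apply (rule exI[of _ "\<lambda>i j k. if i < r0 then c i j k else 0"])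
    using c tensor_of_pad[OF assms r0t] unfolding binary_vecs_def by auto
next
  assume "\<exists>x. binary_vecs t s n x \<and> (\<forall>k\<in>tensor_index s n. B k = tensor_of t s x k)"
  then have h: "has_binary_decomp t s n B" unfolding has_binary_decomp_def by blast
  then show "btf_feasible t s n B" unfolding btf_feasible_def binary_rank_def
    by (auto intro: Least_le)
qed

lemma sq_err_cong:
  assumes "\<forall>k\<in>tensor_index s n. B k = B' k"
  shows "sq_err s n A B = sq_err s n A B'"
  unfolding sq_err_def using assms by (intro sum.cong) auto

lemma part2:
  assumes "binary_vecs t s n x"
  shows "btf_obj t s n A x = (\<Sum>k\<in>tensor_index s n. (A k)^2) - sq_err s n A (tensor_of t s x)"
proof -
  have "btf_obj t s n A x = (\<Sum>k\<in>tensor_index s n. (A k)^2 - (A k - tensor_of t s x k)^2)"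
    unfolding btf_obj_def
  proof (rule sum.cong)
    fix k assume k: "k \<in> tensor_index s n"
    define p where "p i = (\<Prod>j<s. x i j (k j))" for i
    have p01: "p i ^2 = p i" if "i < t" for i
    proof -
      have "\<forall>j<s. x i j (k j) \<in> {0,1}" using assms k that
        unfolding binary_vecs_def tensor_index_def by (auto simp: PiE_iff)
      then have "p i \<in> {0,1}" unfolding p_def
        by (induction s) (auto simp: lessThan_Suc)
      then show ?thesis by auto
    qed
    have pp: "(\<Prod>j<s. x i j (k j) * x i' j (k j)) = p i * p i'" for i i'
      by (simp add: p_def prod.distrib)
    have sq: "(\<Sum>i<t. p i)^2 = (\<Sum>i<t. p i) + 2*(\<Sum>i<t. \<Sum>i'\<in>{i<..<t}. p i * p i')"
      using sq_sum[of p t] p01 by simp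
    have tk: "tensor_of t s x k = (\<Sum>i<t. p i)" by (simp add: tensor_of_def p_def)
    show "(2 * A k - 1) * (\<Sum>i<t. \<Prod>j<s. x i j (k j)) - 2 * (\<Sum>i<t. \<Sum>i'\<in>{i<..<t}. \<Prod>j<s. x i j (k j) * x i' j (k j))
       = (A k)^2 - (A k - tensor_of t s x k)^2"
      unfolding tk pp using sq unfolding p_def[symmetric]
      by (simp add: power2_eq_square algebra_simps)
  qed simp
  then show ?thesis unfolding sq_err_def by (simp add: sum_subtractf)
qed



lemma part3:
  assumes s: "s \<ge> 1" and bx: "binary_vecs t s n x"
  shows "(\<forall>x'. binary_vecs t s n x' \<longrightarrow> btf_obj t s n A x' \<le> btf_obj t s n A x)
          \<longleftrightarrow> btf_optimal t s n A (tensor_of t s x)"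
proof
  assume H: "\<forall>x'. binary_vecs t s n x' \<longrightarrow> btf_obj t s n A x' \<le> btf_obj t s n A x"
  have f: "btf_feasible t s n (tensor_of t s x)" using part1[OF s] bx by blast
  show "btf_optimal t s n A (tensor_of t s x)"
    unfolding btf_optimal_def
  proof (intro conjI allI impI f)
    fix B' assume "btf_feasible t s n B'"
    then obtain x' where x': "binary_vecs t s n x'" "\<forall>k\<in>tensor_index s n. B' k = tensor_of t s x' k"
      using part1[OF s] by blast
    have "sq_err s n A B' = sq_err s n A (tensor_of t s x')" using x'(2) by (rule sq_err_cong)
    moreover have "btf_obj t s n A x' \<le> btf_obj t s n A x" using H x'(1) by blast
    ultimately show "sq_err s n A (tensor_of t s x) \<le> sq_err s n A B'"
      using part2[OF x'(1), of A] part2[OF bx, of A] by simp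
  qed
next
  assume O: "btf_optimal t s n A (tensor_of t s x)"
  show "\<forall>x'. binary_vecs t s n x' \<longrightarrow> btf_obj t s n A x' \<le> btf_obj t s n A x"
  proof (intro allI impI)
    fix x' assume x': "binary_vecs t s n x'"
    have "btf_feasible t s n (tensor_of t s x')" using part1[OF s] x' by blast
    then have "sq_err s n A (tensor_of t s x) \<le> sq_err s n A (tensor_of t s x')"
      using O unfolding btf_optimal_def by blast
    then show "btf_obj t s n A x' \<le> btf_obj t s n A x"
      using part2[OF x', of A] part2[OF bx, of A] by simp
  qed
qed

lemma group_terms:
  fixes c :: "'a \<Rightarrow> rat" and x :: "'v \<Rightarrow> rat"
  assumes "finite T"
  shows "(\<Sum>\<tau>\<in>T. c \<tau> * (\<Prod>v\<in>S \<tau>. x v)) =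
         (\<Sum>e\<in>S ` T. (\<Sum>\<tau>\<in>{\<tau>\<in>T. S \<tau> = e}. c \<tau>) * (\<Prod>v\<in>e. x v))"
proof -
  have "(\<Sum>\<tau>\<in>T. c \<tau> * (\<Prod>v\<in>S \<tau>. x v)) =
        (\<Sum>e\<in>S ` T. \<Sum>\<tau>\<in>{\<tau>\<in>T. S \<tau> = e}. c \<tau> * (\<Prod>v\<in>S \<tau>. x v))"
    using assms by (rule sum.image_gen)
  also have "\<dots> = (\<Sum>e\<in>S ` T. \<Sum>\<tau>\<in>{\<tau>\<in>T. S \<tau> = e}. c \<tau> * (\<Prod>v\<in>e. x v))"
    by (intro sum.cong refl) auto
  also have "\<dots> = (\<Sum>e\<in>S ` T. (\<Sum>\<tau>\<in>{\<tau>\<in>T. S \<tau> = e}. c \<tau>) * (\<Prod>v\<in>e. x v))"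
    by (intro sum.cong refl) (rule sum_distrib_right[symmetric])
  finally show ?thesis .
qed

lemma div_pair:
  fixes i j i' j' s :: nat
  assumes "j < s" "j' < s" "i*s+j = i'*s+j'"
  shows "i = i' \<and> j = j'"
proof -
  have s0: "s > 0" using assms by simp
  have "(i*s+j) div s = i" "(i'*s+j') div s = i'" using assms(1,2) s0
    by (simp_all add: add.commute[of "i*s"] add.commute[of "i'*s"])
  moreover have "(i*s+j) div s = (i'*s+j') div s" using assms(3) by simp
  ultimately have "i = i'" by simp
  then show ?thesis using assms by simp
qed



lemma part4:
  fixes t s :: nat and n :: "nat \<Rightarrow> nat" and A :: "(nat \<Rightarrow> nat) \<Rightarrow> rat"
  assumes s: "s \<ge> 1"
  shows "\<exists>E cV cE. hypergraph (btf_nodes t s n) E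
        \<and> p_partite (s * t) (btf_nodes t s n) E
        \<and> (\<forall>e\<in>E. inj_on (\<lambda>(i, j, k). (i, j)) e)
        \<and> (\<forall>x. (\<forall>v\<in>btf_nodes t s n. x v \<in> {0, 1}) \<longrightarrow>
              probE_obj (btf_nodes t s n) E cV cE x = btf_obj t s n A (\<lambda>i j k. x (i, j, k)))"
proof -
  define V where "V = btf_nodes t s n"
  define I where "I = tensor_index s n"
  define S1 :: "nat \<times> (nat \<Rightarrow> nat) \<Rightarrow> (nat \<times> nat \<times> nat) set"
    where "S1 = (\<lambda>(i,k). (\<lambda>j. (i,j,k j)) ` {..<s})"
  define P2 :: "(nat \<times> nat) set" where "P2 = Sigma {..<t} (\<lambda>i. {i<..<t})"
  define T1 where "T1 = {..<t} \<times> I"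
  define T2 where "T2 = P2 \<times> I"
  define S2 :: "(nat \<times> nat) \<times> (nat \<Rightarrow> nat) \<Rightarrow> (nat \<times> nat \<times> nat) set"
    where "S2 = (\<lambda>((i,i'),k). S1 (i,k) \<union> S1 (i',k))"
  define c1 :: "nat \<times> (nat \<Rightarrow> nat) \<Rightarrow> rat" where "c1 = (\<lambda>(i,k). 2 * A k - 1)"
  define pm :: "nat \<times> nat \<times> nat \<Rightarrow> nat \<times> nat" where "pm = (\<lambda>(i, j, k). (i, j))"
  define side :: "nat \<times> nat \<times> nat \<Rightarrow> nat" where "side = (\<lambda>(i, j, k). i * s + j)"
  have finI: "finite I" unfolding I_def tensor_index_def by (rule finite_PiE) auto
  have finP2: "finite P2" unfolding P2_def by auto
  have finT1: "finite T1" unfolding T1_def using finI by auto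
  have finT2: "finite T2" unfolding T2_def using finI finP2 by auto
  have finV: "finite V"
  proof -
    have "V \<subseteq> {..<t} \<times> {..<s} \<times> {..<Max ((\<lambda>j. n j) ` {..<s})}"
      unfolding V_def btf_nodes_def
      apply clarsimp
      by (meson Max_ge finite_imageI finite_lessThan image_eqI lessThan_iff less_le_trans)
    then show ?thesis by (rule finite_subset) auto
  qed
  have S1_sub: "S1 (i,k) \<subseteq> V" if "i < t" "k \<in> I" for i k
    using that unfolding S1_def V_def btf_nodes_def I_def tensor_index_def by (auto simp: PiE_iff)
  have S1_card: "card (S1 (i,k)) = s" for i k
    unfolding S1_def by (simp add: card_image inj_on_def)
  have S1_disj: "S1 (i,k) \<inter> S1 (i',k) = {}" if "i \<noteq> i'" for i i' k
    using that unfolding S1_def by auto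
  have S2_card: "card (S2 ((i,i'),k)) = 2 * s" if "i \<noteq> i'" for i i' k
    unfolding S2_def using S1_card S1_disj[OF that]
    by (simp add: card_Un_disjoint S1_def)
  have pm_inj: "inj_on pm e" if "e \<subseteq> {(a,j,k j) | a j. True}" for e k
    using that unfolding pm_def inj_on_def by auto
  have S1_form: "S1 (i,k) \<subseteq> {(a,j,k j) | a j. True}" for i k unfolding S1_def by auto
  have S2_form: "S2 ((i,i'),k) \<subseteq> {(a,j,k j) | a j. True}" for i i' k
    unfolding S2_def using S1_form[of i k] S1_form[of i' k] by simp
  have side_inj: "inj_on side e" if "e \<subseteq> V" "inj_on pm e" for e
  proof (rule inj_onI)
    fix u v assume uv: "u \<in> e" "v \<in> e" "side u = side v"
    obtain a j k where u: "u = (a,j,k)" by (cases u) auto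
    obtain a' j' k' where v: "v = (a',j',k')" by (cases v) auto
    have "u \<in> V" "v \<in> V" using uv that(1) by auto
    then have jj: "j < s" "j' < s" using u v unfolding V_def btf_nodes_def by auto
    have "a*s+j = a'*s+j'" using uv(3) u v unfolding side_def by simp
    then have "a = a' \<and> j = j'" by (rule div_pair[OF jj])
    then have "pm u = pm v" using u v unfolding pm_def by simp
    then show "u = v" by (rule inj_onD[OF that(2) _ uv(1,2)])
  qed
  have side_range: "side ` V \<subseteq> {..<s*t}"
  proof
    fix y assume "y \<in> side ` V"
    then obtain i j k where ijk: "i < t" "j < s" "y = i*s+j"
      unfolding V_def btf_nodes_def side_def by auto
    have "i*s+j < (i+1)*s" using ijk by simp
    also have "(i+1)*s \<le> t*s" using ijk by (intro mult_le_mono1) simp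
    finally show "y \<in> {..<s*t}" using ijk by (simp add: mult.commute)
  qed
  have decomp: "btf_obj t s n A (\<lambda>i j k. x (i, j, k)) =
      (\<Sum>\<tau>\<in>T1. c1 \<tau> * (\<Prod>v\<in>S1 \<tau>. x v)) + (\<Sum>\<tau>\<in>T2. (-2) * (\<Prod>v\<in>S2 \<tau>. x v))" for x :: "nat \<times> nat \<times> nat \<Rightarrow> rat"
  proof -
    have a: "(\<Prod>j<s. x (i,j,k j)) = (\<Prod>v\<in>S1 (i,k). x v)" for i k
      unfolding S1_def by (simp add: prod.reindex inj_on_def)
    have b: "(\<Prod>j<s. x (i,j,k j) * x (i',j,k j)) = (\<Prod>v\<in>S2 ((i,i'),k). x v)" if "i \<noteq> i'" for i i' k
    proof -
      have "(\<Prod>v\<in>S2 ((i,i'),k). x v) = (\<Prod>v\<in>S1 (i,k). x v) * (\<Prod>v\<in>S1 (i',k). x v)"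
        unfolding S2_def using S1_disj[OF that]
        by (simp add: prod.union_disjoint S1_def)
      then show ?thesis by (simp add: a[symmetric] prod.distrib)
    qed
    have "btf_obj t s n A (\<lambda>i j k. x (i, j, k)) =
       (\<Sum>k\<in>I. (\<Sum>i<t. c1 (i,k) * (\<Prod>v\<in>S1 (i,k). x v)) + (\<Sum>p\<in>P2. (-2) * (\<Prod>v\<in>S2 (p,k). x v)))"
      unfolding btf_obj_def I_def[symmetric]
    proof (rule sum.cong[OF refl])
      fix k
      have e1: "(2 * A k - 1) * (\<Sum>i<t. \<Prod>j<s. x (i, j, k j)) = (\<Sum>i<t. c1 (i,k) * (\<Prod>v\<in>S1 (i,k). x v))"
        by (simp add: sum_distrib_left a c1_def)
      have e2: "(\<Sum>i<t. \<Sum>i'\<in>{i<..<t}. \<Prod>j<s. x (i, j, k j) * x (i', j, k j))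
          = (\<Sum>p\<in>P2. (\<Prod>v\<in>S2 (p,k). x v))"
      proof -
        have "(\<Sum>i<t. \<Sum>i'\<in>{i<..<t}. \<Prod>j<s. x (i, j, k j) * x (i', j, k j))
            = (\<Sum>i<t. \<Sum>i'\<in>{i<..<t}. \<Prod>v\<in>S2 ((i,i'),k). x v)"
          by (intro sum.cong refl) (simp add: b)
        also have "\<dots> = (\<Sum>(i,i')\<in>P2. \<Prod>v\<in>S2 ((i,i'),k). x v)"
          unfolding P2_def by (rule sum.Sigma) auto
        finally show ?thesis by (simp add: case_prod_beta')
      qed
      show "(2 * A k - 1) * (\<Sum>i<t. \<Prod>j<s. x (i, j, k j)) -
          2 * (\<Sum>i<t. \<Sum>i'\<in>{i<..<t}. \<Prod>j<s. x (i, j, k j) * x (i', j, k j)) =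
          (\<Sum>i<t. c1 (i,k) * (\<Prod>v\<in>S1 (i,k). x v)) + (\<Sum>p\<in>P2. (-2) * (\<Prod>v\<in>S2 (p,k). x v))"
        unfolding e1 e2 by (simp add: sum_distrib_left sum_negf)
    qed
    also have "\<dots> = (\<Sum>k\<in>I. \<Sum>i<t. c1 (i,k) * (\<Prod>v\<in>S1 (i,k). x v)) + (\<Sum>k\<in>I. \<Sum>p\<in>P2. (-2) * (\<Prod>v\<in>S2 (p,k). x v))"
      by (simp add: sum.distrib)
    also have "(\<Sum>k\<in>I. \<Sum>i<t. c1 (i,k) * (\<Prod>v\<in>S1 (i,k). x v)) = (\<Sum>\<tau>\<in>T1. c1 \<tau> * (\<Prod>v\<in>S1 \<tau>. x v))"
      unfolding T1_def sum.cartesian_product' by (rule sum.swap)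
    also have "(\<Sum>k\<in>I. \<Sum>p\<in>P2. (-2) * (\<Prod>v\<in>S2 (p,k). x v)) = (\<Sum>\<tau>\<in>T2. (-2) * (\<Prod>v\<in>S2 \<tau>. x v))"
      unfolding T2_def sum.cartesian_product' by (rule sum.swap)
    finally show ?thesis .
  qed
  define cE2 where "cE2 e = (\<Sum>\<tau>\<in>{\<tau>\<in>T2. S2 \<tau> = e}. (-2::rat))" for e
  have Q: "(\<Sum>\<tau>\<in>T2. (-2) * (\<Prod>v\<in>S2 \<tau>. x v)) = (\<Sum>e\<in>S2 ` T2. cE2 e * (\<Prod>v\<in>e. x v))"
    for x :: "nat \<times> nat \<times> nat \<Rightarrow> rat"
    unfolding cE2_def by (rule group_terms[OF finT2])
  have T2_props: "S2 \<tau> \<subseteq> V \<and> card (S2 \<tau>) \<ge> 2 \<and> inj_on pm (S2 \<tau>)" if tT: "\<tau> \<in> T2" for \<tau>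
  proof -
    obtain i i' k where \<tau>: "\<tau> = ((i,i'),k)" "i < i'" "i' < t" "k \<in> I"
      using tT unfolding T2_def P2_def by auto
    have "S2 \<tau> \<subseteq> V" using S1_sub[of i k] S1_sub[of i' k] \<tau> unfolding S2_def by auto
    moreover have "card (S2 \<tau>) \<ge> 2" using S2_card[of i i' k] \<tau> s by simp
    moreover have "inj_on pm (S2 \<tau>)" unfolding \<tau>(1) by (rule pm_inj[OF S2_form])
    ultimately show ?thesis by blast
  qed
  show ?thesis
  proof (cases "s = 1")
    case True
    define h :: "nat \<times> (nat \<Rightarrow> nat) \<Rightarrow> nat \<times> nat \<times> nat" where "h = (\<lambda>(i,k). (i,0,k 0))"
    define cV where "cV v = (\<Sum>\<tau>\<in>{\<tau>\<in>T1. h \<tau> = v}. c1 \<tau>)" for v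
    have hT1: "h ` T1 \<subseteq> V" using S1_sub True unfolding h_def S1_def T1_def by auto
    have S1h: "S1 \<tau> = {h \<tau>}" for \<tau> using True unfolding S1_def h_def by (auto simp: lessThan_Suc)
    have L: "(\<Sum>\<tau>\<in>T1. c1 \<tau> * (\<Prod>v\<in>S1 \<tau>. x v)) = (\<Sum>v\<in>V. cV v * x v)" for x :: "nat \<times> nat \<times> nat \<Rightarrow> rat"
    proof -
      have "(\<Sum>v\<in>V. cV v * x v) = (\<Sum>v\<in>V. \<Sum>\<tau>\<in>{\<tau>\<in>T1. h \<tau> = v}. c1 \<tau> * x (h \<tau>))"
        unfolding cV_def sum_distrib_right by (intro sum.cong refl) auto
      also have "\<dots> = (\<Sum>\<tau>\<in>T1. c1 \<tau> * x (h \<tau>))"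
        by (rule sum.group[OF finT1 finV hT1])
      finally show ?thesis by (simp add: S1h)
    qed
    show ?thesis
      unfolding V_def[symmetric]
    proof (intro exI conjI allI impI)
      show "hypergraph V (S2 ` T2)" unfolding hypergraph_def using finV finT2 T2_props by auto
      show "p_partite (s * t) V (S2 ` T2)" unfolding p_partite_def
        using side_range side_inj T2_props by blast
      show "\<forall>e\<in>S2 ` T2. inj_on (\<lambda>(i, j, k). (i, j)) e" using T2_props unfolding pm_def by auto
      fix x :: "nat \<times> nat \<times> nat \<Rightarrow> rat"
      show "probE_obj V (S2 ` T2) cV cE2 x = btf_obj t s n A (\<lambda>i j k. x (i, j, k))"
        unfolding probE_obj_def decomp L Q ..
    qed
  next
    case False
    then have s2: "s \<ge> 2" using s by simp
    define cE1 where "cE1 e = (\<Sum>\<tau>\<in>{\<tau>\<in>T1. S1 \<tau> = e}. c1 \<tau>)" for e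
    define cE where "cE e = (if e \<in> S1 ` T1 then cE1 e else cE2 e)" for e
    have L: "(\<Sum>\<tau>\<in>T1. c1 \<tau> * (\<Prod>v\<in>S1 \<tau>. x v)) = (\<Sum>e\<in>S1 ` T1. cE1 e * (\<Prod>v\<in>e. x v))"
      for x :: "nat \<times> nat \<times> nat \<Rightarrow> rat"
      unfolding cE1_def by (rule group_terms[OF finT1])
    have T1_props: "S1 \<tau> \<subseteq> V \<and> card (S1 \<tau>) \<ge> 2 \<and> inj_on pm (S1 \<tau>)" if tT: "\<tau> \<in> T1" for \<tau>
    proof -
      obtain i k where \<tau>: "\<tau> = (i,k)" "i < t" "k \<in> I"
        using tT unfolding T1_def by auto
      show ?thesis using S1_sub[of i k] S1_card[of i k] s2 pm_inj[OF S1_form[of i k]] \<tau> by simp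
    qed
    have disj: "S1 ` T1 \<inter> S2 ` T2 = {}"
    proof (rule ccontr)
      assume "S1 ` T1 \<inter> S2 ` T2 \<noteq> {}"
      then obtain i k a b k' where eq: "S1 (i,k) = S2 ((a,b),k')" and ab: "a < b"
        unfolding T1_def T2_def P2_def by auto
      have "(a,0,k' 0) \<in> S2 ((a,b),k')" "(b,0,k' 0) \<in> S2 ((a,b),k')"
        using s unfolding S2_def S1_def by auto
      then have "a = i" "b = i" using eq unfolding S1_def by auto
      then show False using ab by simp
    qed
    show ?thesis
      unfolding V_def[symmetric]
    proof (intro exI conjI allI impI)
      have "\<forall>e\<in>S1 ` T1 \<union> S2 ` T2. e \<subseteq> V \<and> 2 \<le> card e" using T1_props T2_props by blast
      then show "hypergraph V (S1 ` T1 \<union> S2 ` T2)" unfolding hypergraph_def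
        using finV finT1 finT2 by blast
      show "p_partite (s * t) V (S1 ` T1 \<union> S2 ` T2)" unfolding p_partite_def
        using side_range side_inj T1_props T2_props by blast
      show "\<forall>e\<in>S1 ` T1 \<union> S2 ` T2. inj_on (\<lambda>(i, j, k). (i, j)) e"
        using T1_props T2_props unfolding pm_def by auto
      fix x :: "nat \<times> nat \<times> nat \<Rightarrow> rat"
      have "(\<Sum>e\<in>S1 ` T1 \<union> S2 ` T2. cE e * prod x e) =
            (\<Sum>e\<in>S1 ` T1. cE e * prod x e) + (\<Sum>e\<in>S2 ` T2. cE e * prod x e)"
        using finT1 finT2 disj by (intro sum.union_disjoint) auto
      also have "(\<Sum>e\<in>S1 ` T1. cE e * prod x e) = (\<Sum>e\<in>S1 ` T1. cE1 e * prod x e)"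
        unfolding cE_def by (intro sum.cong refl) auto
      also have "(\<Sum>e\<in>S2 ` T2. cE e * prod x e) = (\<Sum>e\<in>S2 ` T2. cE2 e * prod x e)"
        unfolding cE_def using disj by (intro sum.cong refl) auto
      finally show "probE_obj V (S1 ` T1 \<union> S2 ` T2) (\<lambda>_. 0) cE x = btf_obj t s n A (\<lambda>i j k. x (i, j, k))"
        unfolding probE_obj_def decomp L Q by simp
    qed
  qed
qed


theorem proposition3:
  fixes t s :: nat and n :: "nat \<Rightarrow> nat" and A :: "(nat \<Rightarrow> nat) \<Rightarrow> rat"
  assumes "s \<ge> 1"
  shows
    \<comment> \<open>feasible tensors B are exactly those of the form sum_i x^{i,1} (x) ... (x) x^{i,s}\<close>
    "(\<forall>B. btf_feasible t s n B \<longleftrightarrow>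
        (\<exists>x. binary_vecs t s n x \<and> (\<forall>k\<in>tensor_index s n. B k = tensor_of t s x k)))
   \<and> \<comment> \<open>the objective equals the constant sum a^2 minus the squared error of B\<close>
     (\<forall>x. binary_vecs t s n x \<longrightarrow>
        btf_obj t s n A x = (\<Sum>k\<in>tensor_index s n. (A k)^2) - sq_err s n A (tensor_of t s x))
   \<and> \<comment> \<open>hence maximizers correspond to optimal factorizations\<close>
     (\<forall>x. binary_vecs t s n x \<longrightarrow>
        ((\<forall>x'. binary_vecs t s n x' \<longrightarrow> btf_obj t s n A x' \<le> btf_obj t s n A x)
          \<longleftrightarrow> btf_optimal t s n A (tensor_of t s x)))
   \<and> \<comment> \<open>and the objective is an instance of Problem E on an st-partite hypergraph with sides x^{i,j}\<close>
     (\<exists>E cV cE. hypergraph (btf_nodes t s n) E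
        \<and> p_partite (s * t) (btf_nodes t s n) E
        \<and> (\<forall>e\<in>E. inj_on (\<lambda>(i, j, k). (i, j)) e)
        \<and> (\<forall>x. (\<forall>v\<in>btf_nodes t s n. x v \<in> {0, 1}) \<longrightarrow>
              probE_obj (btf_nodes t s n) E cV cE x = btf_obj t s n A (\<lambda>i j k. x (i, j, k))))"
  proof (intro conjI allI impI)
  fix B show "btf_feasible t s n B \<longleftrightarrow>
        (\<exists>x. binary_vecs t s n x \<and> (\<forall>k\<in>tensor_index s n. B k = tensor_of t s x k))"
    by (rule part1[OF assms])
next
  fix x assume "binary_vecs t s n x"
  then show "btf_obj t s n A x = (\<Sum>k\<in>tensor_index s n. (A k)^2) - sq_err s n A (tensor_of t s x)"
    by (rule part2)
next
  fix x assume "binary_vecs t s n x"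
  then show "(\<forall>x'. binary_vecs t s n x' \<longrightarrow> btf_obj t s n A x' \<le> btf_obj t s n A x)
          \<longleftrightarrow> btf_optimal t s n A (tensor_of t s x)"
    by (rule part3[OF assms])
next
  show "\<exists>E cV cE. hypergraph (btf_nodes t s n) E
        \<and> p_partite (s * t) (btf_nodes t s n) E
        \<and> (\<forall>e\<in>E. inj_on (\<lambda>(i, j, k). (i, j)) e)
        \<and> (\<forall>x. (\<forall>v\<in>btf_nodes t s n. x v \<in> {0, 1}) \<longrightarrow>
              probE_obj (btf_nodes t s n) E cV cE x = btf_obj t s n A (\<lambda>i j k. x (i, j, k)))"
    by (rule part4[OF assms])
qed

end
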